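(* Let $I$ be an ideal over an uncountable cardinal $\kappa$ such that $\mathcal{P}(\kappa)/I$ is complete, and let $\nu$ be a cardinal with $2^\nu<\kappa$. Then forcing with $\mathcal{P}(\kappa)/I\setminus\{[\emptyset]_I\}$ adds no new functions from $\nu$ to $2^\nu$.
   Context: An ideal over $\kappa$ means a proper, $\kappa$-complete ideal on $\mathcal{P}(\kappa)$ containing all singletons. The forcing notion $\mathcal{P}(\kappa)/I\setminus\{[\emptyset]_I\}$ is ordered by $[X]\leq[Y]$ iff $X\setminus Y\in I$. *)

theory Defs
  imports Main "HOL-Library.Countable_Set"
begin

text \<open>An ideal over kappa, where kappa is the cardinality of the carrier set K:
  a proper, kappa-complete ideal on Pow K containing all singletons.\<close>
definition ideal_over :: "'a set \<Rightarrow> 'a set set \<Rightarrow> bool" where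
  "ideal_over K I \<longleftrightarrow>
     I \<subseteq> Pow K \<and>
     (\<forall>X\<in>I. \<forall>Y. Y \<subseteq> X \<longrightarrow> Y \<in> I) \<and>
     (\<forall>F. F \<subseteq> I \<and> (card_of F, card_of K) \<in> ordLess \<longrightarrow> \<Union>F \<in> I) \<and>
     K \<notin> I \<and>
     (\<forall>x\<in>K. {x} \<in> I)"

definition eqI :: "'a set \<Rightarrow> 'a set set \<Rightarrow> ('a set \<times> 'a set) set" where
  "eqI K I = {(X, Y). X \<subseteq> K \<and> Y \<subseteq> K \<and> X - Y \<in> I \<and> Y - X \<in> I}"

definition cls :: "'a set \<Rightarrow> 'a set set \<Rightarrow> 'a set \<Rightarrow> 'a set set" where
  "cls K I X = eqI K I `` {X}"

definition quot_alg :: "'a set \<Rightarrow> 'a set set \<Rightarrow> 'a set set set" where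
  "quot_alg K I = Pow K // eqI K I"

definition leI :: "'a set \<Rightarrow> 'a set set \<Rightarrow> 'a set set \<Rightarrow> 'a set set \<Rightarrow> bool" where
  "leI K I a b \<longleftrightarrow> (\<exists>X Y. X \<subseteq> K \<and> Y \<subseteq> K \<and> a = cls K I X \<and> b = cls K I Y \<and> X - Y \<in> I)"

definition quot_complete :: "'a set \<Rightarrow> 'a set set \<Rightarrow> bool" where
  "quot_complete K I \<longleftrightarrow>
     (\<forall>A \<subseteq> quot_alg K I. \<exists>s \<in> quot_alg K I.
        (\<forall>a\<in>A. leI K I a s) \<and>
        (\<forall>t \<in> quot_alg K I. (\<forall>a\<in>A. leI K I a t) \<longrightarrow> leI K I s t))"

definition forcing_set :: "'a set \<Rightarrow> 'a set set \<Rightarrow> 'a set set set" where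
  "forcing_set K I = quot_alg K I - {cls K I {}}"

definition compat :: "'p set \<Rightarrow> ('p \<Rightarrow> 'p \<Rightarrow> bool) \<Rightarrow> 'p \<Rightarrow> 'p \<Rightarrow> bool" where
  "compat P le p q \<longleftrightarrow> (\<exists>r\<in>P. le r p \<and> le r q)"

definition antichain_below ::
  "'p set \<Rightarrow> ('p \<Rightarrow> 'p \<Rightarrow> bool) \<Rightarrow> 'p \<Rightarrow> 'p set \<Rightarrow> bool" where
  "antichain_below P le p A \<longleftrightarrow>
     A \<subseteq> {r\<in>P. le r p} \<and> (\<forall>r\<in>A. \<forall>s\<in>A. r \<noteq> s \<longrightarrow> \<not> compat P le r s)"

definition maximal_antichain_below ::
  "'p set \<Rightarrow> ('p \<Rightarrow> 'p \<Rightarrow> bool) \<Rightarrow> 'p \<Rightarrow> 'p set \<Rightarrow> bool" where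
  "maximal_antichain_below P le p A \<longleftrightarrow>
     antichain_below P le p A \<and>
     (\<forall>q\<in>P. le q p \<longrightarrow> (\<exists>r\<in>A. compat P le q r))"

text \<open>A nice name, below the condition p, for a function from N to L: for every
  alpha in N a maximal antichain A alpha below p whose members r are labelled with the
  value lab alpha r in L that r forces for the function at alpha.  Every name that p
  forces to be a function from N to L is equivalent below p to such a nice name.\<close>
definition nice_fun_name ::
  "'p set \<Rightarrow> ('p \<Rightarrow> 'p \<Rightarrow> bool) \<Rightarrow> 'p \<Rightarrow> 'n set \<Rightarrow> 'l set
     \<Rightarrow> ('n \<Rightarrow> 'p set) \<Rightarrow> ('n \<Rightarrow> 'p \<Rightarrow> 'l) \<Rightarrow> bool" where
  "nice_fun_name P le p N L A lab \<longleftrightarrow>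
     (\<forall>\<alpha>\<in>N. maximal_antichain_below P le p (A \<alpha>) \<and> (\<forall>r\<in>A \<alpha>. lab \<alpha> r \<in> L))"

definition forces_fun_eq ::
  "'p set \<Rightarrow> ('p \<Rightarrow> 'p \<Rightarrow> bool) \<Rightarrow> 'p \<Rightarrow> 'n set
     \<Rightarrow> ('n \<Rightarrow> 'p set) \<Rightarrow> ('n \<Rightarrow> 'p \<Rightarrow> 'l) \<Rightarrow> ('n \<Rightarrow> 'l) \<Rightarrow> bool" where
  "forces_fun_eq P le q N A lab g \<longleftrightarrow>
     (\<forall>\<alpha>\<in>N. \<forall>r\<in>A \<alpha>. compat P le q r \<longrightarrow> lab \<alpha> r = g \<alpha>)"

definition adds_no_new_functions ::
  "'p set \<Rightarrow> ('p \<Rightarrow> 'p \<Rightarrow> bool) \<Rightarrow> 'n set \<Rightarrow> 'l set \<Rightarrow> bool" where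
  "adds_no_new_functions P le N L \<longleftrightarrow>
     (\<forall>p\<in>P. \<forall>A lab. nice_fun_name P le p N L A lab \<longrightarrow>
        (\<exists>q\<in>P. le q p \<and> (\<exists>g. (\<forall>\<alpha>\<in>N. g \<alpha> \<in> L) \<and> forces_fun_eq P le q N A lab g)))"

end

theory Submission
  imports Defs
begin
unbundle cardinal_syntax

lemma pow_times_less:
  assumes K: "\<not> countable K" and L: "( |Pow N|, |K| ) \<in> ordLess"
  shows "( |Pow (N \<times> N)|, |K| ) \<in> ordLess"
proof (cases "finite N")
  case True
  hence "finite (Pow (N \<times> N))" by simp
  moreover have "infinite K" using K countable_finite by blast
  ultimately show ?thesis
    by (intro finite_ordLess_infinite[OF card_of_Well_order card_of_Well_order]) (simp_all add: Field_card_of)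
next
  case False
  hence "|N \<times> N| =o |N|" by (rule card_of_Times_same_infinite)
  then obtain f where "bij_betw f (N \<times> N) N" using card_of_ordIso by blast
  hence "bij_betw ((`) f) (Pow (N \<times> N)) (Pow N)" by (rule bij_betw_Pow)
  hence "|Pow (N \<times> N)| =o |Pow N|" using card_of_ordIso by blast
  thus ?thesis using L ordIso_ordLess_trans by blast
qed

lemma N_less:
  assumes L: "( |Pow N|, |K| ) \<in> ordLess"
  shows "( |N|, |K| ) \<in> ordLess"
  using ordLeq_ordLess_trans[OF ordLess_imp_ordLeq[OF card_of_Pow] L] .

lemma ideal_down:
  assumes "ideal_over K I" "X \<in> I" "Y \<subseteq> X" shows "Y \<in> I"
proof -
  have "\<forall>X\<in>I. \<forall>Y. Y \<subseteq> X \<longrightarrow> Y \<in> I" using assms(1) unfolding ideal_over_def by (elim conjE)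
  thus ?thesis using assms(2,3) by simp
qed

lemma ideal_compl:
  assumes "ideal_over K I" "F \<subseteq> I" "( |F|, |K| ) \<in> ordLess" shows "\<Union>F \<in> I"
proof -
  have "\<forall>F. F \<subseteq> I \<and> ( |F|, |K| ) \<in> ordLess \<longrightarrow> \<Union>F \<in> I" using assms(1) unfolding ideal_over_def by (elim conjE)
  thus ?thesis using assms(2,3) by simp
qed

lemma ideal_single:
  assumes "ideal_over K I" "x \<in> K" shows "{x} \<in> I"
proof -
  have "\<forall>x\<in>K. {x} \<in> I" using assms(1) unfolding ideal_over_def by (elim conjE)
  thus ?thesis using assms(2) by simp
qed

lemma ideal_union_idx:
  assumes "ideal_over K I" "( |J|, |K| ) \<in> ordLess" "\<And>j. j \<in> J \<Longrightarrow> h j \<in> I"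
  shows "(\<Union>j\<in>J. h j) \<in> I"
proof -
  have "|h ` J| \<le>o |J|" by (rule card_of_image)
  hence "( |h ` J|, |K| ) \<in> ordLess" using assms(2) by (rule ordLeq_ordLess_trans)
  moreover have "h ` J \<subseteq> I" using assms(3) by blast
  ultimately show ?thesis using ideal_compl[OF assms(1)] by blast
qed

lemma ideal_Un:
  assumes "ideal_over K I" "\<not> countable K" "X \<in> I" "Y \<in> I"
  shows "X \<union> Y \<in> I"
proof -
  have "infinite K" using assms(2) countable_finite by blast
  hence "( |{X,Y}|, |K| ) \<in> ordLess"
    by (intro finite_ordLess_infinite[OF card_of_Well_order card_of_Well_order]) (simp_all add: Field_card_of)
  moreover have "{X,Y} \<subseteq> I" using assms by simp
  ultimately have "\<Union>{X,Y} \<in> I" by (rule ideal_compl[OF assms(1), rotated])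
  thus ?thesis by simp
qed

lemma ideal_sub:
  assumes "ideal_over K I" "X \<in> I" "Y \<subseteq> X" shows "Y \<in> I"
  using ideal_down[OF assms] .

lemma ideal_sub2:
  assumes "ideal_over K I" "\<not> countable K" "X \<in> I" "Y \<in> I" "Z \<subseteq> X \<union> Y" shows "Z \<in> I"
  by (rule ideal_sub[OF assms(1) ideal_Un[OF assms(1-4)] assms(5)])

lemma empty_in:
  assumes "ideal_over K I" "\<not> countable K" shows "{} \<in> I"
proof -
  have "K \<noteq> {}" using assms(2) by auto
  then obtain x where "x \<in> K" by blast
  hence "{x} \<in> I" by (rule ideal_single[OF assms(1)])
  thus ?thesis by (rule ideal_sub[OF assms(1)]) simp
qed

lemma cls_eq:
  "X \<subseteq> K \<Longrightarrow> cls K I X = {Y. Y \<subseteq> K \<and> X - Y \<in> I \<and> Y - X \<in> I}"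
  unfolding cls_def eqI_def Image_def by blast

lemma cls_self:
  assumes "ideal_over K I" "\<not> countable K" "X \<subseteq> K" shows "X \<in> cls K I X"
  using cls_eq[OF assms(3), of I] empty_in[OF assms(1,2)] assms(3) by simp

lemma cls_eq_iff:
  assumes "ideal_over K I" "\<not> countable K" "X \<subseteq> K" "Y \<subseteq> K"
  shows "cls K I X = cls K I Y \<longleftrightarrow> X - Y \<in> I \<and> Y - X \<in> I"
proof
  assume "cls K I X = cls K I Y"
  hence "Y \<in> cls K I X" using cls_self[OF assms(1,2,4)] by simp
  thus "X - Y \<in> I \<and> Y - X \<in> I" using cls_eq[OF assms(3)] by simp
next
  assume h: "X - Y \<in> I \<and> Y - X \<in> I"
  have 1: "Z - Y \<in> I \<and> Y - Z \<in> I" if "X - Z \<in> I" "Z - X \<in> I" for Z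
  proof
    show "Z - Y \<in> I" by (rule ideal_sub2[OF assms(1,2) that(2) conjunct1[OF h]]) blast
    show "Y - Z \<in> I" by (rule ideal_sub2[OF assms(1,2) conjunct2[OF h] that(1)]) blast
  qed
  have 2: "X - Z \<in> I \<and> Z - X \<in> I" if "Y - Z \<in> I" "Z - Y \<in> I" for Z
  proof
    show "X - Z \<in> I" by (rule ideal_sub2[OF assms(1,2) conjunct1[OF h] that(1)]) blast
    show "Z - X \<in> I" by (rule ideal_sub2[OF assms(1,2) that(2) conjunct2[OF h]]) blast
  qed
  show "cls K I X = cls K I Y"
    unfolding cls_eq[OF assms(3)] cls_eq[OF assms(4)]
  proof (rule Collect_cong)
    fix Z show "(Z \<subseteq> K \<and> X - Z \<in> I \<and> Z - X \<in> I) = (Z \<subseteq> K \<and> Y - Z \<in> I \<and> Z - Y \<in> I)"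
      using 1[of Z] 2[of Z] by blast
  qed
qed

lemma le_cls:
  assumes "ideal_over K I" "\<not> countable K" "X \<subseteq> K" "Y \<subseteq> K"
  shows "leI K I (cls K I X) (cls K I Y) \<longleftrightarrow> X - Y \<in> I"
proof
  assume "leI K I (cls K I X) (cls K I Y)"
  then have "\<exists>X' Y'. X' \<subseteq> K \<and> Y' \<subseteq> K \<and> cls K I X = cls K I X' \<and> cls K I Y = cls K I Y' \<and> X' - Y' \<in> I"
    unfolding leI_def .
  then obtain X' Y' where h: "X' \<subseteq> K" "Y' \<subseteq> K" "cls K I X = cls K I X'" "cls K I Y = cls K I Y'" "X' - Y' \<in> I"
    by (elim exE conjE)
  have a: "X - X' \<in> I" using cls_eq_iff[OF assms(1,2,3) h(1)] h(3) by simp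
  have b: "Y' - Y \<in> I" using cls_eq_iff[OF assms(1,2,4) h(2)] h(4) by simp
  have c: "(X - X') \<union> (X' - Y') \<in> I" using ideal_Un[OF assms(1,2) a h(5)] .
  show "X - Y \<in> I" by (rule ideal_sub2[OF assms(1,2) c b]) blast
next
  assume "X - Y \<in> I" thus "leI K I (cls K I X) (cls K I Y)" unfolding leI_def using assms(3,4) by blast
qed

lemma quot_alg_iff: "a \<in> quot_alg K I \<longleftrightarrow> (\<exists>X. X \<subseteq> K \<and> a = cls K I X)"
  unfolding quot_alg_def quotient_def cls_def by auto

lemma cls_empty_iff:
  assumes "ideal_over K I" "\<not> countable K" "X \<subseteq> K"
  shows "cls K I X = cls K I {} \<longleftrightarrow> X \<in> I"
  using cls_eq_iff[OF assms(1,2,3), of "{}"] empty_in[OF assms(1,2)] by simp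

lemma forcing_iff:
  assumes "ideal_over K I" "\<not> countable K"
  shows "a \<in> forcing_set K I \<longleftrightarrow> (\<exists>X. X \<subseteq> K \<and> X \<notin> I \<and> a = cls K I X)"
proof
  assume "a \<in> forcing_set K I"
  hence a1: "a \<in> quot_alg K I" and a2: "a \<noteq> cls K I {}" unfolding forcing_set_def by auto
  from a1 obtain X where X: "X \<subseteq> K" "a = cls K I X" unfolding quot_alg_iff by blast
  have "X \<notin> I" using cls_empty_iff[OF assms X(1)] X(2) a2 by simp
  thus "\<exists>X. X \<subseteq> K \<and> X \<notin> I \<and> a = cls K I X" using X by blast
next
  assume "\<exists>X. X \<subseteq> K \<and> X \<notin> I \<and> a = cls K I X"
  then obtain X where X: "X \<subseteq> K" "X \<notin> I" "a = cls K I X" by blast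
  have "a \<noteq> cls K I {}" using cls_empty_iff[OF assms X(1)] X(2,3) by simp
  moreover have "a \<in> quot_alg K I" unfolding quot_alg_iff using X(1,3) by blast
  ultimately show "a \<in> forcing_set K I" unfolding forcing_set_def by simp
qed

lemma compat_iff:
  assumes "ideal_over K I" "\<not> countable K" "X \<subseteq> K" "Y \<subseteq> K"
  shows "compat (forcing_set K I) (leI K I) (cls K I X) (cls K I Y) \<longleftrightarrow> X \<inter> Y \<notin> I"
proof
  assume "compat (forcing_set K I) (leI K I) (cls K I X) (cls K I Y)"
  then obtain r where r: "r \<in> forcing_set K I" "leI K I r (cls K I X)" "leI K I r (cls K I Y)"
    unfolding compat_def by blast
  from r(1) obtain Z where Z: "Z \<subseteq> K" "Z \<notin> I" "r = cls K I Z"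
    unfolding forcing_iff[OF assms(1,2)] by blast
  have z: "Z \<subseteq> K" "Z \<notin> I" "leI K I (cls K I Z) (cls K I X)" "leI K I (cls K I Z) (cls K I Y)"
    using Z r by simp_all
  have zx: "Z - X \<in> I" using z(3) le_cls[OF assms(1,2) z(1) assms(3)] by simp
  have zy: "Z - Y \<in> I" using z(4) le_cls[OF assms(1,2) z(1) assms(4)] by simp
  have u: "(Z - X) \<union> (Z - Y) \<in> I" using ideal_Un[OF assms(1,2) zx zy] .
  show "X \<inter> Y \<notin> I"
  proof
    assume "X \<inter> Y \<in> I"
    hence "Z \<in> I" by (rule ideal_sub2[OF assms(1,2) u]) blast
    thus False using z by simp
  qed
next
  assume h: "X \<inter> Y \<notin> I"
  have xy: "X \<inter> Y \<subseteq> K" using assms(3) by blast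
  have e1: "X \<inter> Y - X = {}" and e2: "X \<inter> Y - Y = {}" by blast+
  have "cls K I (X \<inter> Y) \<in> forcing_set K I" unfolding forcing_iff[OF assms(1,2)] using h xy by blast
  moreover have "leI K I (cls K I (X \<inter> Y)) (cls K I X)" 
    using le_cls[OF assms(1,2) xy assms(3)] empty_in[OF assms(1,2)] e1 by simp
  moreover have "leI K I (cls K I (X \<inter> Y)) (cls K I Y)"
    using le_cls[OF assms(1,2) xy assms(4)] empty_in[OF assms(1,2)] e2 by simp
  ultimately show "compat (forcing_set K I) (leI K I) (cls K I X) (cls K I Y)"
    unfolding compat_def by blast
qed

theorem proposition1p4:
  fixes K :: "'a set" and I :: "'a set set" and N :: "'b set"
  assumes "\<not> countable K"
    and "ideal_over K I"
    and "quot_complete K I"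
    and "(card_of (Pow N), card_of K) \<in> ordLess"
  shows "adds_no_new_functions (forcing_set K I) (leI K I) N (Pow N)"
  unfolding adds_no_new_functions_def
proof (intro ballI allI impI)
  note uc = assms(1) and id = assms(2) and cmp = assms(3) and pw = assms(4)
  note FI = forcing_iff[OF id uc]
  note LE = le_cls[OF id uc]
  note CI = compat_iff[OF id uc]
  note E0 = empty_in[OF id uc]
  note S2 = ideal_sub2[OF id uc]
  fix p A lab
  assume pF: "p \<in> forcing_set K I" and nice: "nice_fun_name (forcing_set K I) (leI K I) p N (Pow N) A lab"
  obtain P where P: "P \<subseteq> K" "P \<notin> I" "p = cls K I P" using pF[unfolded FI] by blast
  have max: "maximal_antichain_below (forcing_set K I) (leI K I) p (A \<alpha>)"
    and labL: "\<And>r. r \<in> A \<alpha> \<Longrightarrow> lab \<alpha> r \<in> Pow N" if "\<alpha> \<in> N" for \<alpha>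
    using nice that unfolding nice_fun_name_def by auto
  have AF: "\<And>r. r \<in> A \<alpha> \<Longrightarrow> r \<in> forcing_set K I" if "\<alpha> \<in> N" for \<alpha>
    using max[OF that] unfolding maximal_antichain_below_def antichain_below_def by blast
  have anti: "\<And>r s. r \<in> A \<alpha> \<Longrightarrow> s \<in> A \<alpha> \<Longrightarrow> r \<noteq> s \<Longrightarrow> \<not> compat (forcing_set K I) (leI K I) r s"
    if "\<alpha> \<in> N" for \<alpha>
    using max[OF that] unfolding maximal_antichain_below_def antichain_below_def by blast
  have maxi: "\<And>q. q \<in> forcing_set K I \<Longrightarrow> leI K I q p \<Longrightarrow> \<exists>r\<in>A \<alpha>. compat (forcing_set K I) (leI K I) q r"
    if "\<alpha> \<in> N" for \<alpha>
    using max[OF that] unfolding maximal_antichain_below_def by blast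
  define Q where "Q \<alpha> l B \<longleftrightarrow> B \<subseteq> K \<and>
      (\<forall>r\<in>A \<alpha>. lab \<alpha> r = l \<longrightarrow> leI K I r (cls K I B)) \<and>
      (\<forall>T. T \<subseteq> K \<longrightarrow> (\<forall>r\<in>A \<alpha>. lab \<alpha> r = l \<longrightarrow> leI K I r (cls K I T)) \<longrightarrow> leI K I (cls K I B) (cls K I T))"
    for \<alpha> l B
  have exB: "\<exists>B. Q \<alpha> l B" if "\<alpha> \<in> N" for \<alpha> l
  proof -
    let ?S = "{r \<in> A \<alpha>. lab \<alpha> r = l}"
    have Ssub: "?S \<subseteq> quot_alg K I" using AF[OF that] unfolding forcing_set_def by blast
    have "\<exists>s \<in> quot_alg K I. (\<forall>a\<in>?S. leI K I a s) \<and>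
        (\<forall>t \<in> quot_alg K I. (\<forall>a\<in>?S. leI K I a t) \<longrightarrow> leI K I s t)"
      using cmp[unfolded quot_complete_def, rule_format, OF Ssub] .
    then obtain s where s: "s \<in> quot_alg K I" "\<forall>a\<in>?S. leI K I a s"
      "\<forall>t \<in> quot_alg K I. (\<forall>a\<in>?S. leI K I a t) \<longrightarrow> leI K I s t"
      by (elim bexE conjE) (rule that; assumption)
    obtain B where B: "B \<subseteq> K" "s = cls K I B" using s(1)[unfolded quot_alg_iff] by blast
    have c2: "\<forall>r\<in>A \<alpha>. lab \<alpha> r = l \<longrightarrow> leI K I r (cls K I B)"
    proof (intro ballI impI)
      fix r assume "r \<in> A \<alpha>" "lab \<alpha> r = l"
      hence "r \<in> ?S" by simp
      hence "leI K I r s" using s(2) by blast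
      thus "leI K I r (cls K I B)" using B(2) by simp
    qed
    have c3: "\<forall>T. T \<subseteq> K \<longrightarrow> (\<forall>r\<in>A \<alpha>. lab \<alpha> r = l \<longrightarrow> leI K I r (cls K I T)) \<longrightarrow> leI K I (cls K I B) (cls K I T)"
    proof (intro allI impI)
      fix T assume T: "T \<subseteq> K" and H: "\<forall>r\<in>A \<alpha>. lab \<alpha> r = l \<longrightarrow> leI K I r (cls K I T)"
      have qa: "cls K I T \<in> quot_alg K I" unfolding quot_alg_iff using T by blast
      have "\<forall>a\<in>?S. leI K I a (cls K I T)" using H by blast
      hence "leI K I s (cls K I T)" using s(3) qa by blast
      thus "leI K I (cls K I B) (cls K I T)" using B(2) by simp
    qed
    have "Q \<alpha> l B" unfolding Q_def using B(1) c2 c3 by blast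
    thus ?thesis by blast
  qed
  define B where "B \<alpha> l = (SOME B. Q \<alpha> l B)" for \<alpha> l
  have QB: "Q \<alpha> l (B \<alpha> l)" if "\<alpha> \<in> N" for \<alpha> l
    unfolding B_def using exB[OF that] by (rule someI_ex)
  have BK: "B \<alpha> l \<subseteq> K" if "\<alpha> \<in> N" for \<alpha> l using QB[OF that] unfolding Q_def by blast
  have Ba: "R - B \<alpha> l \<in> I" if "\<alpha> \<in> N" "r \<in> A \<alpha>" "lab \<alpha> r = l" "R \<subseteq> K" "r = cls K I R" for \<alpha> r l R
  proof -
    have "leI K I r (cls K I (B \<alpha> l))" using QB[OF that(1)] that(2,3) unfolding Q_def by blast
    thus ?thesis using LE[OF that(4) BK[OF that(1)]] that(5) by simp
  qed
  have Bb: "B \<alpha> l - T \<in> I" if aN: "\<alpha> \<in> N" and TK: "T \<subseteq> K" and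
     H: "\<And>r R. r \<in> A \<alpha> \<Longrightarrow> lab \<alpha> r = l \<Longrightarrow> R \<subseteq> K \<Longrightarrow> r = cls K I R \<Longrightarrow> R - T \<in> I" for \<alpha> l T
  proof -
    have H2: "\<forall>r\<in>A \<alpha>. lab \<alpha> r = l \<longrightarrow> leI K I r (cls K I T)"
    proof (intro ballI impI)
      fix r assume r: "r \<in> A \<alpha>" "lab \<alpha> r = l"
      obtain R where R: "R \<subseteq> K" "r = cls K I R" using AF[OF aN r(1), unfolded FI] by blast
      show "leI K I r (cls K I T)" using H[OF r R] LE[OF R(1) TK] R(2) by simp
    qed
    have "\<forall>T. T \<subseteq> K \<longrightarrow> (\<forall>r\<in>A \<alpha>. lab \<alpha> r = l \<longrightarrow> leI K I r (cls K I T)) \<longrightarrow> leI K I (cls K I (B \<alpha> l)) (cls K I T)"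
      using QB[OF aN, of l] unfolding Q_def by (elim conjE)
    hence "leI K I (cls K I (B \<alpha> l)) (cls K I T)" using TK H2 by blast
    thus ?thesis using LE[OF BK[OF aN] TK] by simp
  qed
  have claim1: "P - (\<Union>l\<in>Pow N. B \<alpha> l) \<in> I" if aN: "\<alpha> \<in> N" for \<alpha>
  proof (rule ccontr)
    define D where "D = P - (\<Union>l\<in>Pow N. B \<alpha> l)"
    assume "D \<notin> I" 
    have DK: "D \<subseteq> K" using P(1) unfolding D_def by blast
    have Df: "cls K I D \<in> forcing_set K I" unfolding FI using DK \<open>D \<notin> I\<close> by blast
    have DP: "D - P = {}" unfolding D_def by blast
    have Dp: "leI K I (cls K I D) p" using LE[OF DK P(1)] P(3) E0 DP by simp
    obtain r where r: "r \<in> A \<alpha>" "compat (forcing_set K I) (leI K I) (cls K I D) r"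
      using maxi[OF aN Df Dp] by blast
    obtain R where R: "R \<subseteq> K" "r = cls K I R" using AF[OF aN r(1), unfolded FI] by blast
    have DR: "D \<inter> R \<notin> I" using r(2) CI[OF DK R(1)] R(2) by simp
    have "R - B \<alpha> (lab \<alpha> r) \<in> I" using Ba[OF aN r(1) refl R] .
    moreover have "D \<inter> R \<subseteq> R - B \<alpha> (lab \<alpha> r)" using labL[OF aN r(1)] unfolding D_def by blast
    ultimately show False using DR ideal_sub[OF id] by blast
  qed
  have claim2: "lab \<alpha> r = l" if aN: "\<alpha> \<in> N" and C: "C \<subseteq> K" "C \<notin> I" "C \<subseteq> B \<alpha> l"
    and r: "r \<in> A \<alpha>" "compat (forcing_set K I) (leI K I) (cls K I C) r" for \<alpha> C l r
  proof (rule ccontr)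
    assume ne: "lab \<alpha> r \<noteq> l"
    obtain R where R: "R \<subseteq> K" "r = cls K I R" using AF[OF aN r(1), unfolded FI] by blast
    have CR: "C \<inter> R \<notin> I" using r(2) CI[OF C(1) R(1)] R(2) by simp
    have RB: "R - B \<alpha> (lab \<alpha> r) \<in> I" using Ba[OF aN r(1) refl R] .
    define E' where "E' = C \<inter> R \<inter> B \<alpha> (lab \<alpha> r)"
    have E'I: "E' \<notin> I"
    proof
      assume "E' \<in> I"
      have "C \<inter> R \<in> I" by (rule S2[OF RB \<open>E' \<in> I\<close>]) (auto simp: E'_def)
      thus False using CR by simp
    qed
    have "\<exists>r'\<in>A \<alpha>. lab \<alpha> r' = l \<and> (\<exists>R'. R' \<subseteq> K \<and> r' = cls K I R' \<and> R' \<inter> E' \<notin> I)"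
    proof (rule ccontr)
      assume nn: "\<not> ?thesis"
      have "B \<alpha> l - (K - E') \<in> I"
      proof (rule Bb[OF aN])
        show "K - E' \<subseteq> K" by blast
        fix r' R' assume "r' \<in> A \<alpha>" "lab \<alpha> r' = l" "R' \<subseteq> K" "r' = cls K I R'"
        hence "R' \<inter> E' \<in> I" using nn by blast
        moreover have "R' - (K - E') = R' \<inter> E'" using \<open>R' \<subseteq> K\<close> by blast
        ultimately show "R' - (K - E') \<in> I" by simp
      qed
      moreover have "B \<alpha> l - (K - E') = E'" using C(1,3) BK[OF aN] unfolding E'_def by blast
      ultimately show False using E'I by simp
    qed
    then obtain r' R' where r': "r' \<in> A \<alpha>" "lab \<alpha> r' = l" "R' \<subseteq> K" "r' = cls K I R'" "R' \<inter> E' \<notin> I"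
      by blast
    have "r \<noteq> r'" using ne r'(2) by blast
    moreover have "R \<inter> R' \<notin> I"
    proof
      assume "R \<inter> R' \<in> I"
      moreover have "R' \<inter> E' \<subseteq> R \<inter> R'" unfolding E'_def by blast
      ultimately show False using r'(5) ideal_sub[OF id] by blast
    qed
    hence "compat (forcing_set K I) (leI K I) r r'" using CI[OF R(1) r'(3)] R(2) r'(4) by simp
    ultimately show False using anti[OF aN r(1) r'(1)] by blast
  qed
  show "\<exists>q\<in>forcing_set K I. leI K I q p \<and> (\<exists>g. (\<forall>\<alpha>\<in>N. g \<alpha> \<in> Pow N) \<and> forces_fun_eq (forcing_set K I) (leI K I) q N A lab g)"
  proof -
    define Ex where "Ex = (\<Union>\<alpha>\<in>N. P - (\<Union>l\<in>Pow N. B \<alpha> l))"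
    have ExI: "Ex \<in> I" unfolding Ex_def
      by (rule ideal_union_idx[OF id N_less[OF pw]]) (rule claim1)
    define P' where "P' = P - Ex"
    have P'I: "P' \<notin> I"
    proof
      assume "P' \<in> I"
      hence "P \<in> I" by (rule S2[OF _ ExI]) (auto simp: P'_def)
      thus False using P(2) by simp
    qed
    define sel where "sel x \<alpha> = (SOME l. l \<in> Pow N \<and> x \<in> B \<alpha> l)" for x \<alpha>
    have selP: "sel x \<alpha> \<in> Pow N \<and> x \<in> B \<alpha> (sel x \<alpha>)" if "x \<in> P'" "\<alpha> \<in> N" for x \<alpha>
    proof -
      have "\<exists>l. l \<in> Pow N \<and> x \<in> B \<alpha> l" using that unfolding P'_def Ex_def by blast
      thus ?thesis unfolding sel_def by (rule someI_ex)
    qed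
    define F where "F x = {(\<alpha>, \<beta>). \<alpha> \<in> N \<and> \<beta> \<in> sel x \<alpha>}" for x
    have Fsel: "{\<beta>. (\<alpha>, \<beta>) \<in> F x} = sel x \<alpha>" if "\<alpha> \<in> N" for x \<alpha>
      using that unfolding F_def by auto
    define G where "G = F ` P'"
    have GP: "G \<subseteq> Pow (N \<times> N)" unfolding G_def F_def using selP by blast
    have GK: "( |G|, |K| ) \<in> ordLess"
      using ordLeq_ordLess_trans[OF card_of_mono1[OF GP] pow_times_less[OF uc pw]] .
    have "\<exists>g0\<in>G. {x \<in> P'. F x = g0} \<notin> I"
    proof (rule ccontr)
      assume "\<not> ?thesis"
      hence "\<And>g0. g0 \<in> G \<Longrightarrow> {x \<in> P'. F x = g0} \<in> I" by blast
      hence "(\<Union>g0\<in>G. {x \<in> P'. F x = g0}) \<in> I" by (rule ideal_union_idx[OF id GK])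
      moreover have "(\<Union>g0\<in>G. {x \<in> P'. F x = g0}) = P'" unfolding G_def by blast
      ultimately show False using P'I by simp
    qed
    then obtain g0 where g0: "g0 \<in> G" "{x \<in> P'. F x = g0} \<notin> I" by blast
    define C where "C = {x \<in> P'. F x = g0}"
    have CnI: "C \<notin> I" using g0(2) unfolding C_def .
    have "C \<noteq> {}" using CnI E0 by auto
    then obtain x0 where x0: "x0 \<in> C" by blast
    define g where "g = sel x0"
    have CK: "C \<subseteq> K" using P(1) unfolding C_def P'_def by blast
    have CB: "C \<subseteq> B \<alpha> (g \<alpha>)" if "\<alpha> \<in> N" for \<alpha>
    proof
      fix x assume "x \<in> C"
      hence "sel x \<alpha> = g \<alpha>" using x0 Fsel[OF that, of x] Fsel[OF that, of x0] unfolding C_def g_def by simp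
      thus "x \<in> B \<alpha> (g \<alpha>)" using selP[OF _ that, of x] \<open>x \<in> C\<close> unfolding C_def by auto
    qed
    have qF: "cls K I C \<in> forcing_set K I" unfolding FI using CK CnI by blast
    have CP: "C - P = {}" unfolding C_def P'_def by blast
    have qp: "leI K I (cls K I C) p" using LE[OF CK P(1)] P(3) E0 CP by simp
    have gL: "\<forall>\<alpha>\<in>N. g \<alpha> \<in> Pow N" using selP x0 unfolding g_def C_def by blast
    have "forces_fun_eq (forcing_set K I) (leI K I) (cls K I C) N A lab g"
      unfolding forces_fun_eq_def
    proof (intro ballI impI)
      fix \<alpha> r assume "\<alpha> \<in> N" "r \<in> A \<alpha>" "compat (forcing_set K I) (leI K I) (cls K I C) r"
      thus "lab \<alpha> r = g \<alpha>" using claim2[OF _ CK CnI CB] by blast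
    qed
    thus ?thesis using qF qp gL by blast
  qed
qed

end
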